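(* Let $\mathcal{C}$ be a concept class over $\{\pm1\}^n$, $\mathcal{D}$ a class of distributions closed under restrictions, $D^\star$ a distribution with a depth-$d$ decomposition into distributions in $\mathcal{D}$, and $A$ a base learner using $m$ samples that learns $\mathcal{C}$ to expected error $\le\varepsilon$ under any $D\in\mathcal{D}$. Let \[ m_{\mathrm{train}} \ge \frac{2^d}{\varepsilon}\cdot\max(2m, 8), \] let $f\in\mathcal{C}$, and let $S_{\mathrm{train}}$ consist of $m_{\mathrm{train}}$ i.i.d. examples from $D^\star_f$. Let $\mathcal{H}$ be the random mapping $\rho\mapsto A((S_{\mathrm{train}})_\rho)$ over all depth-$d$ restrictions $\rho$ (randomness from $S_{\mathrm{train}}$ and $A$). Then \[ \mathbb{E}_{\mathcal{H}}\left[\min_{\text{depth-}d\text{ tree }T} \mathrm{error}(T\circ\mathcal{H}, D^\star_f)\right] \le 2\varepsilon. \]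
   Context: A restriction is $\rho\in\{\pm1,\star\}^n$; $x\in\rho$ means $x_i=\rho_i$ or $\rho_i=\star$ for all $i$; depth of $\rho$ = number of non-$\star$ coordinates. $D_\rho$ is $D$ conditioned on $x\in\rho$; for a labeled set $S$, $S_\rho=\{(x,y)\in S:x\in\rho\}$. $\mathcal{D}$ is closed under restrictions if $D\in\mathcal{D}\Rightarrow D_\rho\in\mathcal{D}$ for all $\rho$. $D_f$ is the distribution of $(x,f(x))$, $x\sim D$; $\mathrm{error}(h,P)=\Pr_{(x,y)\sim P}[h(x)\ne y]$. $A$ learns $\mathcal{C}$ to expected error $\varepsilon$ under $D$ using $m$ samples if for every $f\in\mathcal{C}$, given (at least) $m$ i.i.d. samples from $D_f$, its output $h$ has $\mathbb{E}[\mathrm{error}(h,D_f)]\le\varepsilon$. A depth-$d$ decision tree is a set of $2^d$ leaf restrictions defined recursively: depth $0$ is the all-$\star$ restriction; depth $d\ge1$ has a root coordinate $i$ and two depth-$(d-1)$ subtrees not fixing $i$, whose leaves get coordinate $i$ set to $-1$ and $+1$. $D^\star$ has a depth-$d$ decomposition into $\mathcal{D}$ if some depth-$d$ tree $T$ has $(D^\star)_\ell\in\mathcal{D}$ for every leaf $\ell$. $T\circ\mathcal{H}(x)=\mathcal{H}(\ell)(x)$ for the leaf $\ell$ of $T$ containing $x$. *)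

theory Defs
  imports "HOL-Probability.Probability"
begin

text \<open>Points of the cube {+-1}^n are boolean lists of length n (True = +1, False = -1).
Labels +-1 are booleans as well. A restriction is a list of length n over
bool option (None = star, Some b = coordinate fixed to b).\<close>

type_synonym point = "bool list"
type_synonym restriction = "bool option list"
type_synonym hypothesis = "point \<Rightarrow> bool"
type_synonym sample = "(point \<times> bool) list"

definition cube :: "nat \<Rightarrow> point set" where
  "cube n = {x. length x = n}"

definition restrictions :: "nat \<Rightarrow> restriction set" where
  "restrictions n = {\<rho>. length \<rho> = n}"

definition sat :: "restriction \<Rightarrow> point \<Rightarrow> bool" where
  "sat \<rho> x \<longleftrightarrow> (\<forall>i<length \<rho>. \<rho> ! i = None \<or> \<rho> ! i = Some (x ! i))"

definition depth :: "restriction \<Rightarrow> nat" where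
  "depth \<rho> = length (filter (\<lambda>c. c \<noteq> None) \<rho>)"

definition restr_depth :: "nat \<Rightarrow> nat \<Rightarrow> restriction set" where
  "restr_depth n d = {\<rho>. length \<rho> = n \<and> depth \<rho> = d}"

text \<open>D conditioned on x in rho (meaningful when rho has positive mass under D)\<close>
definition restrict_dist :: "point pmf \<Rightarrow> restriction \<Rightarrow> point pmf" where
  "restrict_dist D \<rho> = cond_pmf D {x. sat \<rho> x}"

definition restrict_sample :: "sample \<Rightarrow> restriction \<Rightarrow> sample" where
  "restrict_sample S \<rho> = filter (\<lambda>(x, y). sat \<rho> x) S"

definition closed_under_restrictions :: "nat \<Rightarrow> point pmf set \<Rightarrow> bool" where
  "closed_under_restrictions n DD \<longleftrightarrow>
     (\<forall>D\<in>DD. \<forall>\<rho>\<in>restrictions n. set_pmf D \<inter> {x. sat \<rho> x} \<noteq> {} \<longrightarrow> restrict_dist D \<rho> \<in> DD)"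

definition labeled :: "point pmf \<Rightarrow> hypothesis \<Rightarrow> (point \<times> bool) pmf" where
  "labeled D f = map_pmf (\<lambda>x. (x, f x)) D"

definition error :: "hypothesis \<Rightarrow> (point \<times> bool) pmf \<Rightarrow> real" where
  "error h P = measure_pmf.prob P {(x, y). h x \<noteq> y}"

definition learns :: "hypothesis set \<Rightarrow> (sample \<Rightarrow> hypothesis pmf) \<Rightarrow> real \<Rightarrow> nat \<Rightarrow> point pmf \<Rightarrow> bool" where
  "learns C A eps m D \<longleftrightarrow>
     (\<forall>f\<in>C. \<forall>k\<ge>m. measure_pmf.expectation (replicate_pmf k (labeled D f) \<bind> A)
                       (\<lambda>h. error h (labeled D f)) \<le> eps)"

text \<open>Depth-d decision trees over n variables, represented by their sets of leaf restrictions.\<close>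
inductive is_dtree :: "nat \<Rightarrow> nat \<Rightarrow> restriction set \<Rightarrow> bool" where
  leaf: "is_dtree n 0 {replicate n None}"
| node: "\<lbrakk> i < n; is_dtree n d L0; is_dtree n d L1; \<forall>l\<in>L0 \<union> L1. l ! i = None \<rbrakk>
         \<Longrightarrow> is_dtree n (Suc d) ((\<lambda>l. l[i := Some False]) ` L0 \<union> (\<lambda>l. l[i := Some True]) ` L1)"

definition has_decomposition :: "nat \<Rightarrow> nat \<Rightarrow> point pmf set \<Rightarrow> point pmf \<Rightarrow> bool" where
  "has_decomposition n d DD Dstar \<longleftrightarrow>
     (\<exists>T. is_dtree n d T \<and>
          (\<forall>l\<in>T. set_pmf Dstar \<inter> {x. sat l x} \<noteq> {} \<longrightarrow> restrict_dist Dstar l \<in> DD))"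

definition tree_comp :: "restriction set \<Rightarrow> (restriction \<Rightarrow> hypothesis) \<Rightarrow> hypothesis" where
  "tree_comp T H x = H (THE l. l \<in> T \<and> sat l x) x"

text \<open>The random map H: rho |-> A((S_train)_rho) over all depth-d restrictions rho,
S_train ~ Strain, with independent internal randomness of A for each rho.\<close>
definition hyp_map :: "nat \<Rightarrow> nat \<Rightarrow> (sample \<Rightarrow> hypothesis pmf) \<Rightarrow> sample pmf
                        \<Rightarrow> (restriction \<Rightarrow> hypothesis) pmf" where
  "hyp_map n d A Strain =
     Strain \<bind> (\<lambda>S. Pi_pmf (restr_depth n d) (\<lambda>_. False) (\<lambda>\<rho>. A (restrict_sample S \<rho>)))"

end

theory Submission
  imports Defs
begin

lemma pmf_integrable_bdd:
  fixes f :: "'a \<Rightarrow> real"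
  assumes "\<And>x. \<bar>f x\<bar> \<le> B"
  shows "integrable (measure_pmf M) f"
  by (rule measure_pmf.integrable_const_bound[where B=B]) (use assms in auto)

lemma integral_bind_pmf_bdd:
  fixes f :: "'b \<Rightarrow> real"
  assumes "\<And>x. \<bar>f x\<bar> \<le> B"
  shows "measure_pmf.expectation (bind_pmf M N) f =
         measure_pmf.expectation M (\<lambda>x. measure_pmf.expectation (N x) f)"
  unfolding measure_pmf_bind
  apply (rule integral_bind[where K="count_space UNIV" and B=B and B'=1])
  using assms
  apply (auto simp: space_subprob_algebra measure_pmf.subprob_space_axioms intro!: measure_pmf.finite_measure_axioms)
  done

lemma sat_upd:
  assumes "i < length l" "l ! i = None"
  shows "sat (l[i := Some b]) x \<longleftrightarrow> sat l x \<and> x ! i = b"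
  using assms unfolding sat_def
  by (auto simp: nth_list_update)

lemma depth_upd:
  assumes "i < length l" "l ! i = None"
  shows "depth (l[i := Some b]) = Suc (depth l)"
  using assms unfolding depth_def
proof (induction l arbitrary: i)
  case Nil then show ?case by simp
next
  case (Cons a l) then show ?case by (cases i) auto
qed

lemma upd_inj:
  assumes "l ! i = None" "l' ! i = None" "l[i := Some b] = l'[i := Some b]"
  shows "l = l'"
  by (metis assms list_update_id list_update_overwrite)

lemma dtree_props:
  assumes "is_dtree n d T"
  shows "finite T \<and> card T \<le> 2 ^ d \<and> (\<forall>l\<in>T. length l = n \<and> depth l = d)
         \<and> (\<forall>x. \<exists>!l. l \<in> T \<and> sat l x)"
  using assms
proof (induction rule: is_dtree.induct)
  case (leaf n)
  then show ?case by (auto simp: depth_def sat_def)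
next
  case (node i n d L0 L1)
  let ?T = "(\<lambda>l. l[i := Some False]) ` L0 \<union> (\<lambda>l. l[i := Some True]) ` L1"
  have fin: "finite ?T" using node by auto
  have "card ?T \<le> card L0 + card L1"
    by (rule order_trans[OF card_Un_le]) (intro add_mono card_image_le; use node in auto)
  then have c: "card ?T \<le> 2 ^ Suc d" using node by auto
  have l: "\<forall>l\<in>?T. length l = n \<and> depth l = Suc d"
    using node by (auto simp: depth_upd)
  have u: "\<exists>!l. l \<in> ?T \<and> sat l x" for x
  proof (cases "x ! i")
    case True
    obtain l where l: "l \<in> L1" "sat l x" using node by blast
    show ?thesis
    proof (rule ex1I[of _ "l[i := Some True]"])
      show "l[i := Some True] \<in> ?T \<and> sat (l[i := Some True]) x"
        using l node True by (auto simp: sat_upd)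
    next
      fix l' assume a: "l' \<in> ?T \<and> sat l' x"
      then obtain l2 where "l2 \<in> L1" "l' = l2[i := Some True]"
        using node True by (auto simp: sat_upd)
      moreover have "sat l2 x" using a node calculation by (auto simp: sat_upd)
      moreover have "l2 = l" using node l calculation by blast
      ultimately show "l' = l[i := Some True]" by simp
    qed
  next
    case False
    obtain l where l: "l \<in> L0" "sat l x" using node by blast
    show ?thesis
    proof (rule ex1I[of _ "l[i := Some False]"])
      show "l[i := Some False] \<in> ?T \<and> sat (l[i := Some False]) x"
        using l node False by (auto simp: sat_upd)
    next
      fix l' assume a: "l' \<in> ?T \<and> sat l' x"
      then obtain l2 where "l2 \<in> L0" "l' = l2[i := Some False]"
        using node False by (auto simp: sat_upd)
      moreover have "sat l2 x" using a node calculation by (auto simp: sat_upd)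
      moreover have "l2 = l" using node l calculation by blast
      ultimately show "l' = l[i := Some False]" by simp
    qed
  qed
  show ?case using fin c l u by blast
qed

lemma finite_restr_depth: "finite (restr_depth n d)"
proof -
  have "restr_depth n d \<subseteq> {xs. set xs \<subseteq> UNIV \<and> length xs = n}"
    by (auto simp: restr_depth_def)
  moreover have "finite {xs :: bool option list. set xs \<subseteq> UNIV \<and> length xs = n}"
    by (rule finite_lists_length_eq) simp
  ultimately show ?thesis by (rule finite_subset)
qed

lemma finite_dtrees: "finite {T. is_dtree n d T}"
proof -
  have "{T. is_dtree n d T} \<subseteq> Pow {xs :: bool option list. set xs \<subseteq> UNIV \<and> length xs = n}"
    using dtree_props by fastforce
  moreover have "finite {xs :: bool option list. set xs \<subseteq> UNIV \<and> length xs = n}"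
    by (rule finite_lists_length_eq) simp
  ultimately show ?thesis by (meson finite_Pow_iff finite_subset)
qed

lemma prob_pos_nonempty:
  assumes "measure_pmf.prob P X > 0"
  shows "set_pmf P \<inter> X \<noteq> {}"
proof
  assume "set_pmf P \<inter> X = {}"
  then have "measure_pmf.prob P X = measure_pmf.prob P (X \<inter> set_pmf P)"
    by (simp add: measure_Int_set_pmf)
  also have "\<dots> = 0" using \<open>set_pmf P \<inter> X = {}\<close> by (simp add: Int_commute)
  finally show False using assms by simp
qed

lemma pmf_split_bern:
  assumes p: "measure_pmf.prob P X = p" "0 < p" "p < 1"
  shows "P = bernoulli_pmf p \<bind> (\<lambda>b. if b then cond_pmf P X else cond_pmf P (- X))"
proof (rule pmf_eqI)
  fix x
  have c: "measure_pmf.prob P (- X) = 1 - p"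
    using measure_pmf.prob_compl[of X P] p by (simp add: Compl_eq_Diff_UNIV)
  have ne1: "set_pmf P \<inter> X \<noteq> {}" using prob_pos_nonempty p by auto
  have ne2: "set_pmf P \<inter> - X \<noteq> {}" using prob_pos_nonempty[of P "-X"] c p by auto
  show "pmf P x = pmf (bernoulli_pmf p \<bind> (\<lambda>b. if b then cond_pmf P X else cond_pmf P (- X))) x"
    using p c by (simp add: pmf_bind pmf_cond[OF ne1] pmf_cond[OF ne2])
qed

lemma filter_replicate_pmf:
  fixes P :: "'a pmf"
  assumes pos: "measure_pmf.prob P X > 0"
  shows "map_pmf (filter (\<lambda>z. z \<in> X)) (replicate_pmf M P) =
         binomial_pmf M (measure_pmf.prob P X) \<bind> (\<lambda>k. replicate_pmf k (cond_pmf P X))"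
proof -
  define p where "p = measure_pmf.prob P X"
  have ne1: "set_pmf P \<inter> X \<noteq> {}" using prob_pos_nonempty pos by auto
  have p01: "p \<in> {0..1}" by (simp add: p_def)
  show ?thesis
  proof (cases "p = 1")
    case True
    have c: "measure_pmf.prob P (- X) = 0"
      using measure_pmf.prob_compl[of X P] True by (simp add: Compl_eq_Diff_UNIV p_def)
    have sub: "set_pmf P \<subseteq> X"
    proof
      fix x assume "x \<in> set_pmf P"
      show "x \<in> X"
      proof (rule ccontr)
        assume "x \<notin> X"
        then have "measure_pmf.prob P (- X) > 0" using \<open>x \<in> set_pmf P\<close> by (intro measure_pmf_posI) auto
        with c show False by simp
      qed
    qed
    have CP: "cond_pmf P X = P"
    proof (rule pmf_eqI)
      fix x
      show "pmf (cond_pmf P X) x = pmf P x"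
        using sub True by (auto simp: pmf_cond[OF ne1] p_def set_pmf_eq)
    qed
    have "map_pmf (filter (\<lambda>z. z \<in> X)) (replicate_pmf M P) = map_pmf id (replicate_pmf M P)"
      by (rule pmf.map_cong) (use sub in \<open>auto simp: set_replicate_pmf filter_id_conv\<close>)
    moreover have "binomial_pmf M 1 = return_pmf M"
      using set_pmf_subset_singleton[of "binomial_pmf M 1" M] by simp
    ultimately show ?thesis using True p_def by (simp add: CP bind_return_pmf)
  next
    case False
    then have p1: "p < 1" using p01 by auto
    have p0: "0 < p" using pos p_def by simp
    define C where "C = cond_pmf P X"
    define C' where "C' = cond_pmf P (- X)"
    have setC: "set_pmf C \<subseteq> X" using ne1 by (auto simp: C_def)
    have setC': "set_pmf C' \<subseteq> - X"
    proof -
      have c: "measure_pmf.prob P (- X) = 1 - p"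
        using measure_pmf.prob_compl[of X P] by (simp add: Compl_eq_Diff_UNIV p_def)
      have "set_pmf P \<inter> - X \<noteq> {}" using prob_pos_nonempty[of P "-X"] c p1 by auto
      then show ?thesis by (auto simp: C'_def)
    qed
    have split: "P = bernoulli_pmf p \<bind> (\<lambda>b. if b then C else C')"
      unfolding C_def C'_def by (rule pmf_split_bern) (use p0 p1 p_def in auto)
    show ?thesis unfolding p_def[symmetric] C_def[symmetric]
    proof (induction M)
      case 0
      then show ?case using p01 by (simp add: binomial_pmf_0 bind_return_pmf)
    next
      case (Suc M)
      define R where "R = binomial_pmf M p \<bind> (\<lambda>k. replicate_pmf k C)"
      define G where "G = (\<lambda>z. if z \<in> X then Cons z else id)"
      have "map_pmf (filter (\<lambda>z. z \<in> X)) (replicate_pmf (Suc M) P) =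
            P \<bind> (\<lambda>z. map_pmf (G z) (map_pmf (filter (\<lambda>z. z \<in> X)) (replicate_pmf M P)))"
        by (auto simp: map_bind_pmf map_pmf_def[symmetric] pmf.map_comp o_def G_def
                 intro!: bind_pmf_cong pmf.map_cong)
      also have "\<dots> = P \<bind> (\<lambda>z. map_pmf (G z) R)" using Suc R_def by simp
      also have "\<dots> = bernoulli_pmf p \<bind> (\<lambda>b. if b then C \<bind> (\<lambda>z. map_pmf (Cons z) R) else R)"
        apply (subst split)
        apply (simp add: bind_assoc_pmf)
        apply (rule bind_pmf_cong, simp)
        subgoal for b
        proof (cases b)
          case True then show ?thesis using setC by (auto intro!: bind_pmf_cong simp: G_def)
        next
          case False
          have "C' \<bind> (\<lambda>z. map_pmf (G z) R) = C' \<bind> (\<lambda>z. R)"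
            using setC' by (intro bind_pmf_cong) (auto simp: G_def)
          then show ?thesis using False by simp
        qed
        done
      also have "\<dots> = binomial_pmf (Suc M) p \<bind> (\<lambda>k. replicate_pmf k C)"
        apply (simp add: binomial_pmf_Suc[OF p01] bind_assoc_pmf bind_return_pmf)
        apply (rule bind_pmf_cong, simp)
        apply (auto simp: R_def map_bind_pmf map_pmf_def bind_assoc_pmf bind_return_pmf intro: bind_commute_pmf)
        done
      finally show ?case .
    qed
  qed
qed

lemma integral_bind_pmf_fin:
  fixes f :: "'b \<Rightarrow> real"
  assumes fin: "finite (set_pmf (bind_pmf M N))"
  shows "measure_pmf.expectation (bind_pmf M N) f =
         measure_pmf.expectation M (\<lambda>x. measure_pmf.expectation (N x) f)"
proof -
  define S where "S = set_pmf (bind_pmf M N)"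
  define g where "g = (\<lambda>y. if y \<in> S then f y else 0)"
  define B where "B = (\<Sum>y\<in>S. \<bar>f y\<bar>)"
  have bd: "\<bar>g y\<bar> \<le> B" for y
    using fin by (auto simp: g_def B_def S_def intro!: member_le_sum sum_nonneg)
  have "measure_pmf.expectation (bind_pmf M N) f = measure_pmf.expectation (bind_pmf M N) g"
    by (intro integral_cong_AE AE_pmfI) (auto simp: g_def S_def)
  also have "\<dots> = measure_pmf.expectation M (\<lambda>x. measure_pmf.expectation (N x) g)"
    by (rule integral_bind_pmf_bdd[OF bd])
  also have "\<dots> = measure_pmf.expectation M (\<lambda>x. measure_pmf.expectation (N x) f)"
    by (intro integral_cong_AE AE_pmfI) (auto simp: g_def S_def intro!: integral_cong_AE AE_pmfI)
  finally show ?thesis .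
qed

lemma bin_suc_exp:
  fixes f :: "nat \<Rightarrow> real"
  assumes p: "p \<in> {0..1}"
  shows "measure_pmf.expectation (binomial_pmf (Suc M) p) f =
         p * measure_pmf.expectation (binomial_pmf M p) (\<lambda>k. f (Suc k)) +
         (1 - p) * measure_pmf.expectation (binomial_pmf M p) f"
proof -
  have fin1: "finite (set_pmf (binomial_pmf (Suc M) p))" using p by auto
  have fin2: "finite (set_pmf (binomial_pmf M p))" using p by auto
  have "measure_pmf.expectation (binomial_pmf (Suc M) p) f =
        measure_pmf.expectation (bernoulli_pmf p) (\<lambda>b. measure_pmf.expectation
           (binomial_pmf M p \<bind> (\<lambda>k. return_pmf ((if b then 1 else 0) + k))) f)"
    using fin1 unfolding binomial_pmf_Suc[OF p] by (rule integral_bind_pmf_fin)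
  also have "\<dots> = measure_pmf.expectation (bernoulli_pmf p) (\<lambda>b.
          measure_pmf.expectation (binomial_pmf M p) (\<lambda>k. f ((if b then 1 else 0) + k)))"
  proof -
    have "measure_pmf.expectation (binomial_pmf M p \<bind> (\<lambda>k. return_pmf ((if b then 1 else 0) + k))) f =
          measure_pmf.expectation (binomial_pmf M p) (\<lambda>k. f ((if b then 1 else 0) + k))" for b
    proof -
      have "finite (set_pmf (binomial_pmf M p \<bind> (\<lambda>k. return_pmf ((if b then 1 else 0) + k))))"
        using fin2 by simp
      then show ?thesis by (subst integral_bind_pmf_fin) auto
    qed
    then show ?thesis by simp
  qed
  also have "\<dots> = p * measure_pmf.expectation (binomial_pmf M p) (\<lambda>k. f (Suc k)) +
         (1 - p) * measure_pmf.expectation (binomial_pmf M p) f"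
    using p by simp
  finally show ?thesis .
qed

lemma bin_moments:
  assumes p: "p \<in> {0..1}"
  shows "measure_pmf.expectation (binomial_pmf M p) (\<lambda>k. real k) = M * p \<and>
         measure_pmf.expectation (binomial_pmf M p) (\<lambda>k. (real k)^2) = M * p * (1 - p) + (M * p)^2"
proof (induction M)
  case 0
  then show ?case using p by (simp add: binomial_pmf_0)
next
  case (Suc M)
  have i: "integrable (measure_pmf (binomial_pmf M p)) (f :: nat \<Rightarrow> real)" for f using p by auto
  have e1: "measure_pmf.expectation (binomial_pmf M p) (\<lambda>k. real (Suc k)) = M * p + 1"
    using Suc i by (simp add: Bochner_Integration.integral_add)
  have e2: "measure_pmf.expectation (binomial_pmf M p) (\<lambda>k. (real (Suc k))^2) =
      M * p * (1 - p) + (M * p)^2 + 2 * (M * p) + 1"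
  proof -
    have "(\<lambda>k. (real (Suc k))^2) = (\<lambda>k. (real k)^2 + (2 * real k + 1))"
      by (auto simp: power2_eq_square algebra_simps)
    then show ?thesis using Suc i
      by (simp add: Bochner_Integration.integral_add)
  qed
  show ?case
    using p by (simp add: bin_suc_exp e1 e2 Suc[THEN conjunct1] Suc[THEN conjunct2] del: of_nat_Suc)
      (simp add: algebra_simps power2_eq_square)
qed

lemma bin_cheb:
  assumes p: "p \<in> {0..1}" and m: "real m \<le> M * p / 2" and pos: "0 < M * p"
  shows "measure_pmf.prob (binomial_pmf M p) {..<m} \<le> 4 / (M * p)"
proof -
  define a where "a = M * p"
  have i: "integrable (measure_pmf (binomial_pmf M p)) (f :: nat \<Rightarrow> real)" for f using p by auto
  have "measure_pmf.prob (binomial_pmf M p) {..<m} =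
        measure_pmf.expectation (binomial_pmf M p) (indicator {..<m})"
    by simp
  also have "\<dots> \<le> measure_pmf.expectation (binomial_pmf M p)
                   (\<lambda>k. 4 / a^2 * ((real k)^2 - 2 * a * real k + a^2))"
  proof (rule integral_mono[OF i i])
    fix k :: nat
    have eq: "(real k)^2 - 2 * a * real k + a^2 = (a - real k)^2"
      by (simp add: power2_eq_square algebra_simps)
    have "indicator {..<m} k \<le> 4 / a^2 * (a - real k)^2"
    proof (cases "k < m")
      case True
      then have "real k < a / 2" using m a_def by linarith
      then have "a / 2 \<le> a - real k" by simp
      then have "(a/2)^2 \<le> (a - real k)^2" by (rule power_mono) (use pos a_def in simp)
      moreover have "4 / a^2 * (a/2)^2 = 1"
      proof -
        have "a \<noteq> 0" using pos a_def by linarith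
        then show ?thesis by (simp add: field_simps power2_eq_square)
      qed
      ultimately have "1 \<le> 4 / a^2 * (a - real k)^2"
        by (metis mult_left_mono zero_le_divide_iff zero_le_numeral zero_le_power2)
      then show ?thesis using True by simp
    next
      case False
      have "0 \<le> 4 / a^2 * (a - real k)^2" by simp
      then show ?thesis using False by simp
    qed
    then show "indicator {..<m} k \<le> 4 / a^2 * ((real k)^2 - 2 * a * real k + a^2)"
      by (simp only: eq)
  qed
  also have "\<dots> = 4 / a^2 * (measure_pmf.expectation (binomial_pmf M p) (\<lambda>k. (real k)^2)
        - 2 * a * measure_pmf.expectation (binomial_pmf M p) (\<lambda>k. real k) + a^2)"
    using i by (simp add: Bochner_Integration.integral_add Bochner_Integration.integral_diff)
  also have "\<dots> = 4 / a^2 * (a * (1 - p))"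
  proof -
    have e1: "measure_pmf.expectation (binomial_pmf M p) (\<lambda>k. real k) = a"
      and e2: "measure_pmf.expectation (binomial_pmf M p) (\<lambda>k. (real k)^2) = a * (1 - p) + a^2"
      using bin_moments[OF p, of M] unfolding a_def by auto
    have "a * (1 - p) + a^2 - 2 * a * a + a^2 = a * (1 - p)"
      by (simp add: power2_eq_square algebra_simps)
    then show ?thesis by (simp only: e1 e2)
  qed
  also have "\<dots> \<le> 4 / a"
  proof -
    have apos: "a > 0" using pos a_def by linarith
    have "4 / a^2 * (a * (1 - p)) = 4 * (1 - p) / a" using apos by (simp add: field_simps power2_eq_square)
    also have "\<dots> \<le> 4 / a" using apos p by (intro divide_right_mono) auto
    finally show ?thesis .
  qed
  finally show ?thesis unfolding a_def .
qed

lemma measure_cond_pmf: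
  assumes "measure_pmf.prob P X > 0"
  shows "measure_pmf.prob (cond_pmf P X) B = measure_pmf.prob P (X \<inter> B) / measure_pmf.prob P X"
proof -
  have ne: "set_pmf P \<inter> X \<noteq> {}" using prob_pos_nonempty assms by auto
  show ?thesis
    unfolding cond_pmf.rep_eq[OF ne]
    using assms by (subst measure_uniform_measure) (auto simp: measure_pmf.emeasure_eq_measure)
qed

lemma leaf_tail:
  fixes eps p :: real
  assumes eps: "eps > 0" and M: "real M \<ge> 2 ^ d / eps * real (max (2 * m) 8)"
    and p: "0 < p" "p \<le> 1"
  shows "p * measure_pmf.prob (binomial_pmf M p) {..<m} \<le> eps / 2 ^ d"
proof (cases "p \<le> eps / 2 ^ d")
  case True
  have "p * measure_pmf.prob (binomial_pmf M p) {..<m} \<le> p * 1"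
    using p by (intro mult_left_mono) auto
  then show ?thesis using True by simp
next
  case False
  define c where "c = 2 ^ d / eps"
  have c0: "c > 0" using eps by (simp add: c_def)
  have pc: "p * c > 1" using False eps by (simp add: c_def field_simps)
  have mx: "real (max (2 * m) 8) \<ge> 2 * real m" "real (max (2 * m) 8) \<ge> 8" by auto
  have Mc: "real M \<ge> c * real (max (2 * m) 8)" using M c_def by simp
  have "real M * p \<ge> p * c * real (max (2 * m) 8)" using Mc p by (simp add: mult.commute mult_left_mono)
  also have "p * c * real (max (2 * m) 8) \<ge> real (max (2 * m) 8)"
    using pc by (simp add: mult_le_cancel_right1)
  finally have Mp: "real M * p \<ge> real (max (2 * m) 8)" .
  then have Mp1: "real m \<le> real M * p / 2" "0 < real M * p" using mx by auto
  have "measure_pmf.prob (binomial_pmf M p) {..<m} \<le> 4 / (real M * p)"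
    by (rule bin_cheb) (use p Mp1 in auto)
  then have "p * measure_pmf.prob (binomial_pmf M p) {..<m} \<le> p * (4 / (real M * p))"
    using p by (intro mult_left_mono) auto
  also have "\<dots> = 4 / real M" using p by simp
  also have "\<dots> \<le> eps / 2 ^ d"
  proof -
    have "real M \<ge> c * 8" using Mc mx c0 by (meson mult_left_mono less_imp_le order_trans)
    then have "4 / real M \<le> 4 / (c * 8)" using c0 by (intro divide_left_mono) auto
    also have "\<dots> \<le> eps / 2 ^ d" using eps by (simp add: c_def field_simps)
    finally show ?thesis .
  qed
  finally show ?thesis .
qed

lemma leaf_bound:
  fixes Dstar :: "point pmf" and f :: hypothesis and l :: restriction
    and A :: "sample \<Rightarrow> hypothesis pmf" and eps :: real
  defines "P \<equiv> labeled Dstar f" and "X \<equiv> {(x :: point, y :: bool). sat l x}"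
  assumes pos: "measure_pmf.prob P X > 0"
    and L: "learns C A eps m (restrict_dist Dstar l)" and fC: "f \<in> C" and eps: "eps > 0"
  shows "measure_pmf.expectation (replicate_pmf M P \<bind> (\<lambda>S. A (restrict_sample S l)))
           (\<lambda>h. measure_pmf.prob P {(x, y). sat l x \<and> h x \<noteq> y})
         \<le> measure_pmf.prob P X * eps
           + measure_pmf.prob P X * measure_pmf.prob (binomial_pmf M (measure_pmf.prob P X)) {..<m}"
proof -
  define p where "p = measure_pmf.prob P X"
  define Pl where "Pl = cond_pmf P X"
  have p01: "p \<in> {0..1}" by (simp add: p_def)
  have ne: "set_pmf Dstar \<inter> {x. sat l x} \<noteq> {}"
    using prob_pos_nonempty[OF pos] by (auto simp: P_def X_def labeled_def)
  have Pl_eq: "Pl = labeled (restrict_dist Dstar l) f"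
  proof -
    have "(\<lambda>x. (x, f x)) -` X = {x. sat l x}" by (auto simp: X_def)
    then show ?thesis unfolding Pl_def P_def labeled_def restrict_dist_def
      using ne by (subst cond_map_pmf) auto
  qed
  have rs: "restrict_sample S l = filter (\<lambda>z. z \<in> X) S" for S
    by (auto simp: restrict_sample_def X_def intro!: filter_cong)
  have distr: "replicate_pmf M P \<bind> (\<lambda>S. A (restrict_sample S l)) =
        binomial_pmf M p \<bind> (\<lambda>k. replicate_pmf k Pl \<bind> A)"
  proof -
    have "replicate_pmf M P \<bind> (\<lambda>S. A (restrict_sample S l)) =
          map_pmf (filter (\<lambda>z. z \<in> X)) (replicate_pmf M P) \<bind> A"
      by (simp add: bind_map_pmf rs)
    also have "\<dots> = binomial_pmf M p \<bind> (\<lambda>k. replicate_pmf k Pl \<bind> A)"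
      using filter_replicate_pmf[OF pos, of M] by (simp add: p_def Pl_def bind_assoc_pmf)
    finally show ?thesis .
  qed
  have g: "measure_pmf.prob P {(x, y). sat l x \<and> h x \<noteq> y} = p * error h Pl" for h
  proof -
    have "measure_pmf.prob Pl {(x, y). h x \<noteq> y} = measure_pmf.prob P (X \<inter> {(x, y). h x \<noteq> y}) / p"
      unfolding Pl_def p_def by (rule measure_cond_pmf[OF pos])
    moreover have "X \<inter> {(x, y). h x \<noteq> y} = {(x, y). sat l x \<and> h x \<noteq> y}" by (auto simp: X_def)
    ultimately show ?thesis using pos by (simp add: error_def p_def)
  qed
  have errb: "\<bar>error h Q\<bar> \<le> 1" for h Q by (simp add: error_def)
  have "measure_pmf.expectation (replicate_pmf M P \<bind> (\<lambda>S. A (restrict_sample S l)))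
           (\<lambda>h. measure_pmf.prob P {(x, y). sat l x \<and> h x \<noteq> y})
       = p * measure_pmf.expectation (binomial_pmf M p \<bind> (\<lambda>k. replicate_pmf k Pl \<bind> A))
              (\<lambda>h. error h Pl)"
    unfolding distr g by simp
  also have "measure_pmf.expectation (binomial_pmf M p \<bind> (\<lambda>k. replicate_pmf k Pl \<bind> A))
              (\<lambda>h. error h Pl) = measure_pmf.expectation (binomial_pmf M p)
              (\<lambda>k. measure_pmf.expectation (replicate_pmf k Pl \<bind> A) (\<lambda>h. error h Pl))"
    by (rule integral_bind_pmf_bdd[OF errb])
  also have "\<dots> \<le> measure_pmf.expectation (binomial_pmf M p) (\<lambda>k. eps + indicator {..<m} k)"
  proof (rule integral_mono)
    show "integrable (measure_pmf (binomial_pmf M p)) (\<lambda>k. eps + indicator {..<m} k)"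
      using p01 by auto
    show "integrable (measure_pmf (binomial_pmf M p))
            (\<lambda>k. measure_pmf.expectation (replicate_pmf k Pl \<bind> A) (\<lambda>h. error h Pl))"
      using p01 by auto
    fix k
    show "measure_pmf.expectation (replicate_pmf k Pl \<bind> A) (\<lambda>h. error h Pl) \<le> eps + indicator {..<m} k"
    proof (cases "k < m")
      case True
      have "measure_pmf.expectation (replicate_pmf k Pl \<bind> A) (\<lambda>h. error h Pl) \<le>
            measure_pmf.expectation (replicate_pmf k Pl \<bind> A) (\<lambda>h. 1)"
        by (intro integral_mono pmf_integrable_bdd[OF errb]) (auto simp: error_def)
      then show ?thesis using True eps by simp
    next
      case False
      then have "measure_pmf.expectation (replicate_pmf k Pl \<bind> A) (\<lambda>h. error h Pl) \<le> eps"
        using L fC unfolding learns_def Pl_eq by auto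
      then show ?thesis using False by simp
    qed
  qed
  also have "\<dots> = eps + measure_pmf.prob (binomial_pmf M p) {..<m}"
    using p01 by (simp add: Bochner_Integration.integral_add)
  finally have "measure_pmf.expectation (replicate_pmf M P \<bind> (\<lambda>S. A (restrict_sample S l)))
           (\<lambda>h. measure_pmf.prob P {(x, y). sat l x \<and> h x \<noteq> y})
       \<le> p * (eps + measure_pmf.prob (binomial_pmf M p) {..<m})"
    using p01 by (simp add: mult_left_mono)
  then show ?thesis by (simp add: p_def algebra_simps)
qed

theorem claim6p6:
  fixes n d m m_train :: nat and eps :: real
    and C :: "hypothesis set" and DD :: "point pmf set" and Dstar :: "point pmf"
    and A :: "sample \<Rightarrow> hypothesis pmf" and f :: hypothesis
  assumes "eps > 0"
    and "\<forall>D\<in>DD. set_pmf D \<subseteq> cube n"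
    and "closed_under_restrictions n DD"
    and "set_pmf Dstar \<subseteq> cube n"
    and "has_decomposition n d DD Dstar"
    and "\<forall>D\<in>DD. learns C A eps m D"
    and "real m_train \<ge> 2 ^ d / eps * real (max (2 * m) 8)"
    and "f \<in> C"
  shows "measure_pmf.expectation (hyp_map n d A (replicate_pmf m_train (labeled Dstar f)))
           (\<lambda>H. Min {error (tree_comp T H) (labeled Dstar f) | T. is_dtree n d T}) \<le> 2 * eps"
proof -
  note eps = assms(1) and M = assms(7) and fC = assms(8)
  obtain T where T: "is_dtree n d T"
    and dec: "\<forall>l\<in>T. set_pmf Dstar \<inter> {x. sat l x} \<noteq> {} \<longrightarrow> restrict_dist Dstar l \<in> DD"
    using assms(5) unfolding has_decomposition_def by blast
  note Tp = dtree_props[OF T]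
  have finT: "finite T" and cardT: "card T \<le> 2 ^ d"
    and TR: "T \<subseteq> restr_depth n d" and uniq: "\<And>x. \<exists>!l. l \<in> T \<and> sat l x"
    using Tp by (auto simp: restr_depth_def)
  define P where "P = labeled Dstar f"
  define Strain where "Strain = replicate_pmf m_train P"
  define HM where "HM = hyp_map n d A Strain"
  define X where "X = (\<lambda>l. {(x :: point, y :: bool). sat l x})"
  define E where "E = (\<lambda>l (h :: hypothesis). {(x :: point, y :: bool). sat l x \<and> h x \<noteq> y})"
  define p where "p = (\<lambda>l. measure_pmf.prob P (X l))"
  have errb: "\<bar>error h Q\<bar> \<le> 1" for h Q by (simp add: error_def)
  define Mn where "Mn = (\<lambda>H. Min {error (tree_comp T' H) P | T'. is_dtree n d T'})"
  have Mn_le: "Mn H \<le> error (tree_comp T H) P" for H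
  proof -
    have "{error (tree_comp T' H) P | T'. is_dtree n d T'} = (\<lambda>T'. error (tree_comp T' H) P) ` {T'. is_dtree n d T'}"
      by auto
    then have "finite {error (tree_comp T' H) P | T'. is_dtree n d T'}"
      using finite_dtrees by simp
    then show ?thesis unfolding Mn_def by (rule Min_le) (use T in auto)
  qed
  have Mn_b: "\<bar>Mn H\<bar> \<le> 1" for H
  proof -
    have eq: "{error (tree_comp T' H) P | T'. is_dtree n d T'} = (\<lambda>T'. error (tree_comp T' H) P) ` {T'. is_dtree n d T'}"
      by auto
    have "Mn H \<in> {error (tree_comp T' H) P | T'. is_dtree n d T'}"
      unfolding Mn_def eq by (rule Min_in) (use finite_dtrees T in auto)
    then show ?thesis using errb by auto
  qed
  have disj: "disjoint_family_on (\<lambda>l. X l) T"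
    using uniq unfolding disjoint_family_on_def X_def by blast
  have err_dec: "error (tree_comp T H) P = (\<Sum>l\<in>T. measure_pmf.prob P (E l (H l)))" for H
  proof -
    have "{(x, y). tree_comp T H x \<noteq> y} = (\<Union>l\<in>T. E l (H l))"
    proof (intro set_eqI iffI)
      fix z :: "point \<times> bool"
      obtain x y where z: "z = (x, y)" by (cases z)
      obtain l where l: "l \<in> T" "sat l x" using uniq by blast
      have th: "(THE l. l \<in> T \<and> sat l x) = l"
        using l uniq by (intro the1_equality) auto
      { assume "z \<in> {(x, y). tree_comp T H x \<noteq> y}"
        then show "z \<in> (\<Union>l\<in>T. E l (H l))" using l th z by (auto simp: tree_comp_def E_def) }
      { assume "z \<in> (\<Union>l\<in>T. E l (H l))"
        then obtain l' where "l' \<in> T" "sat l' x" "H l' x \<noteq> y" using z by (auto simp: E_def)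
        moreover have "l' = l" using uniq l calculation by blast
        ultimately show "z \<in> {(x, y). tree_comp T H x \<noteq> y}" using th z by (auto simp: tree_comp_def) }
    qed
    moreover have "disjoint_family_on (\<lambda>l. E l (H l)) T"
      using uniq unfolding disjoint_family_on_def E_def by blast
    ultimately show ?thesis unfolding error_def
      by (simp add: measure_pmf.finite_measure_finite_Union[OF finT])
  qed
  have sum_p: "(\<Sum>l\<in>T. p l) \<le> 1"
  proof -
    have "(\<Sum>l\<in>T. p l) = measure_pmf.prob P (\<Union>l\<in>T. X l)"
      unfolding p_def using disj by (simp add: measure_pmf.finite_measure_finite_Union[OF finT])
    then show ?thesis by simp
  qed
  have marg: "map_pmf (\<lambda>H. H l) HM = Strain \<bind> (\<lambda>S. A (restrict_sample S l))" if "l \<in> T" for l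
    using that TR finite_restr_depth[of n d]
    by (auto simp: HM_def hyp_map_def map_bind_pmf Pi_pmf_component)
  have leaf: "measure_pmf.expectation HM (\<lambda>H. measure_pmf.prob P (E l (H l))) \<le> p l * eps + eps / 2 ^ d"
    if lT: "l \<in> T" for l
  proof -
    have "measure_pmf.expectation HM (\<lambda>H. measure_pmf.prob P (E l (H l))) =
          measure_pmf.expectation (map_pmf (\<lambda>H. H l) HM) (\<lambda>h. measure_pmf.prob P (E l h))"
      by simp
    also have "\<dots> = measure_pmf.expectation (Strain \<bind> (\<lambda>S. A (restrict_sample S l)))
                      (\<lambda>h. measure_pmf.prob P (E l h))"
      using marg[OF lT] by simp
    also have "\<dots> \<le> p l * eps + eps / 2 ^ d"
    proof (cases "p l > 0")
      case True
      have ne: "set_pmf Dstar \<inter> {x. sat l x} \<noteq> {}"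
        using prob_pos_nonempty[of P "X l"] True by (auto simp: p_def P_def X_def labeled_def)
      then have "restrict_dist Dstar l \<in> DD" using dec lT by blast
      then have L: "learns C A eps m (restrict_dist Dstar l)" using assms(6) by blast
      have "measure_pmf.expectation (Strain \<bind> (\<lambda>S. A (restrict_sample S l)))
                      (\<lambda>h. measure_pmf.prob P (E l h))
            \<le> p l * eps + p l * measure_pmf.prob (binomial_pmf m_train (p l)) {..<m}"
        using leaf_bound[of Dstar f l C A eps m m_train] True L fC eps
        by (simp add: Strain_def P_def E_def p_def X_def)
      also have "p l * measure_pmf.prob (binomial_pmf m_train (p l)) {..<m} \<le> eps / 2 ^ d"
        by (rule leaf_tail[OF eps M]) (use True in \<open>auto simp: p_def\<close>)
      finally show ?thesis by simp
    next
      case False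
      then have p0: "p l = 0" using measure_nonneg[of "measure_pmf P" "X l"] by (simp add: p_def)
      have "measure_pmf.prob P (E l h) = 0" for h
      proof -
        have "measure_pmf.prob P (E l h) \<le> measure_pmf.prob P (X l)"
          by (rule measure_pmf.finite_measure_mono) (auto simp: E_def X_def)
        then show ?thesis using p0 p_def by (simp add: measure_nonneg antisym)
      qed
      then show ?thesis using eps p0 by simp
    qed
    finally show ?thesis .
  qed
  have "measure_pmf.expectation HM Mn \<le> measure_pmf.expectation HM (\<lambda>H. error (tree_comp T H) P)"
    by (intro integral_mono pmf_integrable_bdd[OF errb] pmf_integrable_bdd[OF Mn_b] Mn_le)
  also have "\<dots> = measure_pmf.expectation HM (\<lambda>H. \<Sum>l\<in>T. measure_pmf.prob P (E l (H l)))"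
    by (simp add: err_dec)
  also have "\<dots> = (\<Sum>l\<in>T. measure_pmf.expectation HM (\<lambda>H. measure_pmf.prob P (E l (H l))))"
  proof (rule Bochner_Integration.integral_sum)
    fix l show "integrable (measure_pmf HM) (\<lambda>H. measure_pmf.prob P (E l (H l)))"
      by (rule pmf_integrable_bdd[where B=1]) simp
  qed
  also have "\<dots> \<le> (\<Sum>l\<in>T. p l * eps + eps / 2 ^ d)"
    by (intro sum_mono leaf)
  also have "\<dots> = eps * (\<Sum>l\<in>T. p l) + card T * (eps / 2 ^ d)"
    by (simp add: sum.distrib sum_distrib_left mult.commute)
  also have "\<dots> \<le> eps * 1 + 2 ^ d * (eps / 2 ^ d)"
    using sum_p cardT eps
    by (intro add_mono mult_left_mono mult_right_mono) auto
  also have "\<dots> = 2 * eps" by simp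
  finally show ?thesis unfolding HM_def Strain_def Mn_def P_def .
qed

end
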